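(* Let $R$ be a commutative ring with identity and let $A$ be a $2\times 2$ matrix over $R$ whose entries generate the ideal $R$. Then $A$ is equivalent to a diagonal matrix if and only if the submodule of $R^2$ generated by the rows of $A$ contains a unimodular row. Moreover, in this case $A$ is equivalent to a matrix of the form $\begin{pmatrix}1&0\\0&d\end{pmatrix}$ for some $d\in R$.
   Context: Two matrices $A,B\in M_{m,n}(R)$ are equivalent if there exist invertible matrices $P\in M_{m,m}(R)$ and $Q\in M_{n,n}(R)$ with $B=PAQ$. A row $[r_1,\dots,r_n]$ over $R$ is unimodular if $r_1,\dots,r_n$ generate the unit ideal $R$. *)

theory Defs
  imports "HOL-Analysis.Analysis"
begin

definition unimodular :: "'a::comm_ring_1 ^ 'n \<Rightarrow> bool" where
  "unimodular r \<longleftrightarrow> (\<exists>c :: 'a ^ 'n. (\<Sum>i\<in>UNIV. c $ i * r $ i) = 1)"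

definition entries_unimodular :: "'a::comm_ring_1 ^ 'n ^ 'm \<Rightarrow> bool" where
  "entries_unimodular A \<longleftrightarrow>
     (\<exists>c :: 'a ^ 'n ^ 'm. (\<Sum>i\<in>UNIV. \<Sum>j\<in>UNIV. c $ i $ j * A $ i $ j) = 1)"

definition mat_equiv :: "'a::comm_ring_1 ^ 'n ^ 'm \<Rightarrow> 'a ^ 'n ^ 'm \<Rightarrow> bool" where
  "mat_equiv A B \<longleftrightarrow>
     (\<exists>(P :: 'a ^ 'm ^ 'm) (Q :: 'a ^ 'n ^ 'n). invertible P \<and> invertible Q \<and> B = P ** A ** Q)"

definition diagonal_mat :: "'a::zero ^ 'n ^ 'n \<Rightarrow> bool" where
  "diagonal_mat D \<longleftrightarrow> (\<forall>i j. i \<noteq> j \<longrightarrow> D $ i $ j = 0)"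

definition row_module :: "'a::comm_ring_1 ^ 'n ^ 'm \<Rightarrow> ('a ^ 'n) set" where
  "row_module A = {c v* A | c. True}"

definition diag2 :: "'a::comm_ring_1 \<Rightarrow> 'a \<Rightarrow> 'a ^ 2 ^ 2" where
  "diag2 a b = (\<chi> i j. if i = j then (if i = 1 then a else b) else 0)"

end

theory Submission
  imports Defs
begin

definition m2 :: "'a::comm_ring_1 \<Rightarrow> 'a \<Rightarrow> 'a \<Rightarrow> 'a \<Rightarrow> 'a^2^2" where
  "m2 a b c d = (\<chi> i j. if i = 1 then (if j = 1 then a else b) else (if j = 1 then c else d))"

lemma two_ne_one: "(2::2) \<noteq> 1" by simp

lemma m2_nth[simp]: "m2 a b c d $ 1 $ 1 = a" "m2 a b c d $ 1 $ 2 = b"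
  "m2 a b c d $ 2 $ 1 = c" "m2 a b c d $ 2 $ 2 = d"
  by (simp_all add: m2_def)

lemma m2_eq: "(M::'a::comm_ring_1^2^2) = m2 (M$1$1) (M$1$2) (M$2$1) (M$2$2)"
  unfolding vec_eq_iff forall_2 by simp

lemma m2_mult: "m2 a b c d ** m2 e f g h = m2 (a*e+b*g) (a*f+b*h) (c*e+d*g) (c*f+d*h)"
  unfolding vec_eq_iff forall_2 matrix_matrix_mult_def by (simp add: sum_2)

lemma m2_mat1: "mat 1 = (m2 1 0 0 1 :: 'a::comm_ring_1^2^2)"
  unfolding vec_eq_iff forall_2 mat_def by simp

lemma m2_diag2: "diag2 1 d = m2 1 0 0 d"
  unfolding vec_eq_iff forall_2 diag2_def by simp

lemma m2_inj: "m2 a b c d = m2 a' b' c' d' \<longleftrightarrow> a = a' \<and> b = b' \<and> c = c' \<and> d = d'"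
  by (metis m2_nth)

lemma m2_invertible:
  assumes "a*d - b*c = (1::'a::comm_ring_1)"
  shows "invertible (m2 a b c d)"
  unfolding invertible_def
proof (intro exI conjI)
  show "m2 a b c d ** m2 d (-b) (-c) a = mat 1"
    unfolding m2_mult m2_mat1 m2_inj using assms by (simp add: algebra_simps)
  show "m2 d (-b) (-c) a ** m2 a b c d = mat 1"
    unfolding m2_mult m2_mat1 m2_inj using assms by (simp add: algebra_simps)
qed

lemma vm2: "((x::'a::comm_ring_1^2) v* (M::'a^2^2)) $ 1 = x$1 * M$1$1 + x$2 * M$2$1"
  "(x v* M) $ 2 = x$1*M$1$2 + x$2*M$2$2"
  unfolding vector_matrix_mult_def by (simp_all add: sum_2)

lemma backward:
  fixes A :: "'a::comm_ring_1^2^2"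
  assumes "r \<in> row_module A" "unimodular r"
  shows "\<exists>d. mat_equiv A (diag2 1 d)"
proof -
  obtain cv where r: "r = cv v* A" using assms(1) unfolding row_module_def by auto
  obtain u :: "'a^2" where u: "u$1 * r$1 + u$2 * r$2 = 1"
    using assms(2) unfolding unimodular_def by (auto simp: sum_2)
  define a b c d where "a = A$1$1" "b = A$1$2" "c = A$2$1" "d = A$2$2"
  define p q where "p = cv$1" "q = cv$2"
  have r1: "r$1 = p*a + q*c" and r2: "r$2 = p*b+q*d"
    unfolding r vm2 a_b_c_d_def p_q_def by auto
  define u1 u2 where "u1 = u$1" "u2 = u$2"
  have U: "u1*(p*a+q*c) + u2*(p*b+q*d) = 1" using u r1 r2 u1_u2_def by simp
  define B11 B12 B21 B22 where "B11 = a*u1 + b*u2" "B12 = -a*(p*b+q*d) + b*(p*a+q*c)"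
    "B21 = c*u1 + d*u2" "B22 = -c*(p*b+q*d) + d*(p*a+q*c)"
  define Q where "Q = m2 u1 (-(p*b+q*d)) u2 (p*a+q*c)"
  define P where "P = m2 p q (-B21) B11"
  have hA: "A = m2 a b c d" using m2_eq a_b_c_d_def by metis
  have iQ: "invertible Q" unfolding Q_def
    by (rule m2_invertible) (use U in \<open>simp add: algebra_simps\<close>)
  have e1: "p*B11 + q*B21 = 1"
  proof -
    have "p*B11 + q*B21 = u1*(p*a+q*c) + u2*(p*b+q*d)"
      unfolding B11_B12_B21_B22_def by (simp add: algebra_simps)
    thus ?thesis using U by simp
  qed
  have iP: "invertible P" unfolding P_def
    by (rule m2_invertible) (use e1 in \<open>simp add: algebra_simps\<close>)
  have e2: "p*B12 + q*B22 = 0"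
    unfolding B11_B12_B21_B22_def by (simp add: algebra_simps)
  have "P ** A ** Q = m2 (p*B11 + q*B21) (p*B12 + q*B22) (-B21*B11 + B11*B21) (-B21*B12+B11*B22)"
    unfolding hA P_def Q_def m2_mult m2_inj B11_B12_B21_B22_def by (simp add: algebra_simps)
  also have "\<dots> = diag2 1 (B11*B22 - B21*B12)"
    unfolding m2_diag2 m2_inj using e1 e2 by (simp add: algebra_simps)
  finally show ?thesis using iP iQ unfolding mat_equiv_def by metis
qed

lemma forward:
  fixes A :: "'a::comm_ring_1^2^2"
  assumes "entries_unimodular A" "diagonal_mat D" "mat_equiv A D"
  shows "\<exists>r\<in>row_module A. unimodular r"
proof -
  obtain P Q where iP: "invertible P" and iQ: "invertible Q" and D: "D = P ** A ** Q"
    using assms(3) unfolding mat_equiv_def by auto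
  obtain P' where P': "P' ** P = mat 1" using iP unfolding invertible_def by auto
  obtain Q' where Q': "Q ** Q' = mat 1" using iQ unfolding invertible_def by auto
  have AD: "A = P' ** D ** Q'"
    by (simp add: D P' Q' matrix_mul_assoc[symmetric]) (simp add: matrix_mul_assoc P')
  have D12: "D$1$2 = 0" and D21: "D$2$1 = 0" using assms(2) unfolding diagonal_mat_def by auto
  obtain C :: "'a^2^2" where C: "(\<Sum>i\<in>UNIV. \<Sum>j\<in>UNIV. C $ i $ j * A $ i $ j) = 1"
    using assms(1) unfolding entries_unimodular_def by auto
  define x y where "x = (\<Sum>i\<in>UNIV. \<Sum>j\<in>UNIV. C $ i $ j * P'$i$1 * Q'$1$j)"
     "y = (\<Sum>i\<in>UNIV. \<Sum>j\<in>UNIV. C $ i $ j * P'$i$2 * Q'$2$j)"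
  have xy: "x * D$1$1 + y * D$2$2 = 1"
  proof -
    have "x * D$1$1 + y * D$2$2 = (\<Sum>i\<in>UNIV. \<Sum>j\<in>UNIV. C $ i $ j * (P' ** D ** Q') $ i $ j)"
      unfolding x_y_def matrix_matrix_mult_def
      by (simp add: sum_2 D12 D21 algebra_simps)
    thus ?thesis using C AD by simp
  qed
  define cv :: "'a^2" where "cv = vector [1,1] v* P"
  define r where "r = cv v* A"
  have rQ: "r v* Q = vector [1,1] v* D"
    unfolding r_def cv_def D by (simp add: vector_matrix_mul_assoc matrix_mul_assoc)
  have rq1: "r$1 * Q$1$1 + r$2*Q$2$1 = D$1$1"
    using arg_cong[OF rQ, of "\<lambda>v. v$1"] unfolding vm2 by (simp add: D21)
  have rq2: "r$1 * Q$1$2 + r$2*Q$2$2 = D$2$2"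
    using arg_cong[OF rQ, of "\<lambda>v. v$2"] unfolding vm2 by (simp add: D12)
  have "unimodular r"
    unfolding unimodular_def
  proof (intro exI)
    let ?c = "vector [x*Q$1$1 + y*Q$1$2, x*Q$2$1 + y*Q$2$2] :: 'a^2"
    have "(\<Sum>i\<in>UNIV. ?c $ i * r $ i) = x * (r$1 * Q$1$1 + r$2*Q$2$1) + y * (r$1 * Q$1$2 + r$2*Q$2$2)"
      by (simp add: sum_2 algebra_simps)
    also have "\<dots> = 1" using rq1 rq2 xy by simp
    finally show "(\<Sum>i\<in>UNIV. ?c $ i * r $ i) = 1" .
  qed
  moreover have "r \<in> row_module A" unfolding row_module_def r_def by auto
  ultimately show ?thesis by auto
qed

theorem lemma2p4:
  fixes A :: "'a::comm_ring_1 ^ 2 ^ 2"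
  assumes "entries_unimodular A"
  shows "((\<exists>D. diagonal_mat D \<and> mat_equiv A D) \<longleftrightarrow> (\<exists>r\<in>row_module A. unimodular r))
         \<and> ((\<exists>D. diagonal_mat D \<and> mat_equiv A D) \<longrightarrow> (\<exists>d. mat_equiv A (diag2 1 d)))"
proof -
  have dd: "diagonal_mat (diag2 1 d)" for d :: 'a
    unfolding diagonal_mat_def diag2_def by simp
  show ?thesis using forward[OF assms] backward dd by blast
qed

end
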